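(* Let $\Sigma\in\mathbb R^{d\times d}$ be symmetric positive semidefinite with eigenvalues $\lambda_1\ge\dots\ge\lambda_d\ge0$ and corresponding orthonormal eigenvectors $u_1,\dots,u_d$. For each $\ell$ let $u_{\ell,(1)}^2\le\dots\le u_{\ell,(d)}^2$ be the order statistics of $u_{\ell,1}^2,\dots,u_{\ell,d}^2$. Let $\Delta$ be any diagonal matrix with $\Delta\succeq\Sigma$, and let $\Delta_{(1,1)}\le\dots\le\Delta_{(d,d)}$ be the order statistics of its diagonal entries. Then for all $k=1,\dots,d$, $$\Delta_{(k,k)}\ \ge\ b_k(\Sigma):=\max_{\ell\le d}\ \lambda_\ell\sum_{j=1}^k u_{\ell,(j)}^2.$$
   Context: $\succeq$ denotes the positive semidefinite order. *)

theory Defs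
  imports "HOL-Analysis.Analysis" "HOL-Library.Multiset"
begin

definition psd :: "real^'n^'n \<Rightarrow> bool" where
  "psd A \<longleftrightarrow> (\<forall>x. x \<bullet> (A *v x) \<ge> 0)"

definition loewner_ge :: "real^'n^'n \<Rightarrow> real^'n^'n \<Rightarrow> bool" where
  "loewner_ge A B \<longleftrightarrow> psd (A - B)"

definition order_stat :: "('n::finite \<Rightarrow> real) \<Rightarrow> nat \<Rightarrow> real" where
  "order_stat f k = sorted_list_of_multiset (image_mset f (mset_set (UNIV :: 'n set))) ! (k - 1)"

end

theory Submission
  imports Defs
begin

lemma order_stat_list:
  fixes f :: "'n::finite \<Rightarrow> real"
  obtains ixs where "distinct ixs" "set ixs = UNIV" "sorted (map f ixs)"
    "length ixs = CARD('n)"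
    "\<And>j. 1 \<le> j \<Longrightarrow> j \<le> CARD('n) \<Longrightarrow> order_stat f j = f (ixs!(j-1))"
proof -
  obtain ns :: "'n list" where ns: "distinct ns" "set ns = UNIV"
    using finite_distinct_list[of "UNIV :: 'n set"] by auto
  define ixs where "ixs = sort_key f ns"
  have d: "distinct ixs" using ns by (simp add: ixs_def)
  have s: "set ixs = UNIV" using ns by (simp add: ixs_def)
  have so: "sorted (map f ixs)" by (simp add: ixs_def)
  have l: "length ixs = CARD('n)" using ns d s
    by (metis distinct_card)
  have m: "image_mset f (mset_set (UNIV :: 'n set)) = mset (map f ns)"
    using ns by (metis mset_map mset_set_set)
  have "sort (map f ns) = map f ixs"
    by (rule properties_for_sort) (simp_all add: ixs_def)
  then have "order_stat f j = f (ixs!(j-1))" if "1 \<le> j" "j \<le> CARD('n)" for j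
  proof -
    have "order_stat f j = sorted_list_of_multiset (mset (map f ns)) ! (j-1)"
      unfolding order_stat_def m ..
    also have "\<dots> = (map f ixs) ! (j-1)" using \<open>sort (map f ns) = map f ixs\<close>
      by (simp only: sorted_list_of_multiset_mset)
    finally show ?thesis using that l by simp
  qed
  then show ?thesis using that d s so l by blast
qed

lemma sorted_prefix_le:
  fixes f :: "'a \<Rightarrow> real"
  assumes "distinct ixs" "sorted (map f ixs)" "p \<in> set (take k ixs)" "q \<in> set ixs - set (take k ixs)"
  shows "f p \<le> f q"
proof -
  obtain a where a: "a < length (take k ixs)" "take k ixs ! a = p"
    using assms(3) unfolding in_set_conv_nth by blast
  obtain b where b: "b < length ixs" "ixs ! b = q"
  proof -
    have "q \<in> set ixs" using assms(4) by simp
    then show ?thesis using that unfolding in_set_conv_nth by blast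
  qed
  have "\<not> b < k"
  proof
    assume "b < k"
    then have "take k ixs ! b = q" "b < length (take k ixs)" using b by auto
    then have "q \<in> set (take k ixs)" by (metis nth_mem)
    then show False using assms(4) by auto
  qed
  then have ab: "a \<le> b" using a by auto
  have pa: "p = ixs ! a" using a by auto
  have "(map f ixs) ! a \<le> (map f ixs) ! b"
    by (rule sorted_nth_mono[OF assms(2) ab]) (use b in simp)
  then show ?thesis using pa b ab by simp
qed

lemma sum_exchange_le:
  fixes f :: "'a \<Rightarrow> real"
  assumes fin: "finite P" "finite T" and c: "card P = card T"
    and le: "\<And>p q. p \<in> P - T \<Longrightarrow> q \<in> T - P \<Longrightarrow> f p \<le> f q"
  shows "sum f P \<le> sum f T"
proof -
  have cc: "card (P - T) = card (T - P)"
    using c fin by (metis card_Diff_subset_Int inf_commute finite_Int)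
  obtain g where g: "bij_betw g (P - T) (T - P)"
    using finite_same_card_bij[OF _ _ cc] fin by auto
  have "sum f (P - T) \<le> sum (f \<circ> g) (P - T)"
    apply (rule sum_mono) using g le by (auto simp: bij_betw_def)
  also have "\<dots> = sum f (T - P)" using sum.reindex_bij_betw[OF g] by simp
  finally have 1: "sum f (P - T) \<le> sum f (T - P)" .
  have "sum f P = sum f (P - T) + sum f (P \<inter> T)"
    using fin by (metis add.commute sum.Int_Diff)
  moreover have "sum f T = sum f (T - P) + sum f (P \<inter> T)"
    using fin by (metis add.commute inf_commute sum.Int_Diff)
  ultimately show ?thesis using 1 by simp
qed

lemma quad_axis: "axis i (1::real) \<bullet> ((A::real^'n^'n) *v axis i 1) = A $ i $ i"
  by (simp add: matrix_vector_mult_basis inner_axis' column_def)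

theorem proposition5:
  fixes \<Sigma> \<Delta> :: "real^'n^'n"
    and lam :: "nat \<Rightarrow> real"
    and u :: "nat \<Rightarrow> real^'n"
  assumes sym: "transpose \<Sigma> = \<Sigma>"
    and psd: "psd \<Sigma>"
    and lam_dec: "\<And>i j. 1 \<le> i \<Longrightarrow> i \<le> j \<Longrightarrow> j \<le> CARD('n) \<Longrightarrow> lam j \<le> lam i"
    and lam_nonneg: "lam (CARD('n)) \<ge> 0"
    and eig: "\<And>l. l \<in> {1..CARD('n)} \<Longrightarrow> \<Sigma> *v u l = lam l *\<^sub>R u l"
    and orthonormal: "\<And>l m. l \<in> {1..CARD('n)} \<Longrightarrow> m \<in> {1..CARD('n)} \<Longrightarrow>
                        u l \<bullet> u m = (if l = m then 1 else 0)"
    and diag: "\<And>i j. i \<noteq> j \<Longrightarrow> \<Delta> $ i $ j = 0"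
    and dom: "loewner_ge \<Delta> \<Sigma>"
  shows "\<forall>k \<in> {1..CARD('n)}.
           order_stat (\<lambda>i. \<Delta> $ i $ i) k \<ge>
           Max ((\<lambda>l. lam l * (\<Sum>j = 1..k. order_stat (\<lambda>i. (u l $ i)^2) j)) ` {1..CARD('n)})"
proof
  fix k assume k: "k \<in> {1..CARD('n)}"
  have domx: "x \<bullet> (\<Sigma> *v x) \<le> x \<bullet> (\<Delta> *v x)" for x
  proof -
    have "0 \<le> x \<bullet> ((\<Delta> - \<Sigma>) *v x)" using dom unfolding loewner_ge_def psd_def by blast
    then show ?thesis by (simp add: matrix_vector_mult_diff_rdistrib inner_diff_right)
  qed
  have Dnn: "\<Delta> $ i $ i \<ge> 0" for i
    using domx[of "axis i 1"] psd[unfolded psd_def, rule_format, of "axis i 1"]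
    by (simp add: quad_axis)
  have Dv: "(\<Delta> *v x) $ i = \<Delta> $ i $ i * x $ i" for x i
  proof -
    have "(\<Delta> *v x) $ i = (\<Sum>j\<in>UNIV. \<Delta> $ i $ j * x $ j)" by (simp add: matrix_vector_mult_def)
    also have "\<dots> = (\<Sum>j\<in>{i}. \<Delta> $ i $ j * x $ j)"
      by (rule sum.mono_neutral_right) (auto simp: diag)
    finally show ?thesis by simp
  qed
  define dd where "dd = (\<lambda>i. \<Delta> $ i $ i)"
  obtain isd where isd: "distinct isd" "set isd = UNIV" "sorted (map dd isd)"
    "length isd = CARD('n)"
    "\<And>j. 1 \<le> j \<Longrightarrow> j \<le> CARD('n) \<Longrightarrow> order_stat dd j = dd (isd!(j-1))"
    using order_stat_list by blast
  define T where "T = set (take k isd)"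
  define m where "m = order_stat dd k"
  have cardT: "card T = k" using isd k by (simp add: T_def distinct_card)
  have m_eq: "m = dd (isd!(k-1))" using isd k by (simp add: m_def)
  have Tle: "dd i \<le> m" if iT: "i \<in> T" for i
  proof -
    obtain a where a: "a < length (take k isd)" "take k isd ! a = i"
      using iT unfolding T_def in_set_conv_nth by blast
    have "a \<le> k - 1" "k - 1 < length isd" using a k isd(4) by auto
    then have "(map dd isd)!a \<le> (map dd isd)!(k-1)"
      by (intro sorted_nth_mono[OF isd(3)]) auto
    then have "dd (isd!a) \<le> dd (isd!(k-1))" using \<open>a \<le> k - 1\<close> \<open>k - 1 < length isd\<close> by simp
    then show ?thesis using a m_eq by auto
  qed
  have m_nn: "m \<ge> 0" using m_eq Dnn dd_def by simp
  have main: "lam l * (\<Sum>j = 1..k. order_stat (\<lambda>i. (u l $ i)^2) j) \<le> m"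
    if l: "l \<in> {1..CARD('n)}" for l
  proof -
    define v where "v = u l"
    define f where "f = (\<lambda>i. (v $ i)^2)"
    have lnn: "lam l \<ge> 0" using lam_dec[of l "CARD('n)"] l lam_nonneg by auto
    have ev: "\<Sigma> *v v = lam l *\<^sub>R v" using eig l v_def by simp
    have vv: "v \<bullet> v = 1" using orthonormal[OF l l] v_def by simp
    obtain isf where isf: "distinct isf" "set isf = UNIV" "sorted (map f isf)"
      "length isf = CARD('n)"
      "\<And>j. 1 \<le> j \<Longrightarrow> j \<le> CARD('n) \<Longrightarrow> order_stat f j = f (isf!(j-1))"
      using order_stat_list by blast
    define P where "P = set (take k isf)"
    have b_eq: "(\<Sum>j = 1..k. order_stat f j) = sum f P"
    proof -
      have "(\<Sum>j = 1..k. order_stat f j) = (\<Sum>j = 1..k. f (isf!(j-1)))"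
        using isf k by (intro sum.cong) auto
      also have "\<dots> = (\<Sum>a<k. f (isf!a))"
        by (rule sum.reindex_bij_witness[of _ "\<lambda>a. a+1" "\<lambda>j. j-1"]) auto
      also have "\<dots> = sum f P"
      proof -
        have "P = (\<lambda>a. isf!a) ` {..<k}" using isf k
          by (simp add: P_def nth_image[symmetric] lessThan_atLeast0)
        moreover have "inj_on (\<lambda>a. isf!a) {..<k}" using isf k
          by (auto simp: inj_on_def nth_eq_iff_index_eq)
        ultimately show ?thesis by (simp add: sum.reindex)
      qed
      finally show ?thesis .
    qed
    have cardP: "card P = k" using isf k by (simp add: P_def distinct_card)
    have bP: "sum f P \<le> sum f T"
    proof (rule sum_exchange_le)
      show "card P = card T" using cardP cardT by simp
      show "f p \<le> f q" if "p \<in> P - T" "q \<in> T - P" for p q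
        using sorted_prefix_le[OF isf(1) isf(3), of p k q] that isf(2) unfolding P_def by auto
    qed auto
    define s where "s = sum f T"
    define x :: "real^'n" where "x = (\<chi> i. if i \<in> T then v $ i else 0)"
    have xv: "x \<bullet> v = s"
    proof -
      have "(\<lambda>i. x$i * v$i) = (\<lambda>i. if i\<in>T then f i else 0)"
        by (auto simp: x_def f_def power2_eq_square)
      then have "x \<bullet> v = (\<Sum>i\<in>UNIV. if i\<in>T then f i else 0)"
        unfolding inner_vec_def inner_real_def by (simp only:)
      also have "\<dots> = sum f (UNIV \<inter> T)" by (simp only: sum.inter_restrict[OF finite_class.finite_UNIV])
      finally show ?thesis by (simp add: s_def)
    qed
    have xD: "x \<bullet> (\<Delta> *v x) = (\<Sum>i\<in>T. dd i * f i)"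
    proof -
      have "(\<lambda>i. x$i * (\<Delta> *v x)$i) = (\<lambda>i. if i\<in>T then dd i * f i else 0)"
        by (auto simp: Dv x_def f_def dd_def power2_eq_square)
      then have "x \<bullet> (\<Delta> *v x) = (\<Sum>i\<in>UNIV. if i\<in>T then dd i * f i else 0)"
        unfolding inner_vec_def inner_real_def by (simp only:)
      also have "\<dots> = (\<Sum>i\<in>UNIV \<inter> T. dd i * f i)"
        by (simp only: sum.inter_restrict[OF finite_class.finite_UNIV])
      finally show ?thesis by simp
    qed
    have xD2: "x \<bullet> (\<Delta> *v x) \<le> m * s"
    proof -
      have "(\<Sum>i\<in>T. dd i * f i) \<le> (\<Sum>i\<in>T. m * f i)"
        by (rule sum_mono) (auto intro!: mult_right_mono Tle simp: f_def)
      then show ?thesis using xD by (simp add: s_def sum_distrib_left)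
    qed
    have vSx: "v \<bullet> (\<Sigma> *v x) = lam l * s"
    proof -
      have "v \<bullet> (\<Sigma> *v x) = (v v* \<Sigma>) \<bullet> x" by (simp add: dot_lmul_matrix)
      also have "\<dots> = (\<Sigma> *v v) \<bullet> x" using sym transpose_matrix_vector[of \<Sigma> v] by simp
      finally show ?thesis using ev xv by (simp add: inner_commute)
    qed
    have xSv: "x \<bullet> (\<Sigma> *v v) = lam l * s" using ev xv by simp
    have "0 \<le> (x - s *\<^sub>R v) \<bullet> (\<Sigma> *v (x - s *\<^sub>R v))"
      using psd unfolding psd_def by blast
    also have "\<Sigma> *v (x - s *\<^sub>R v) = \<Sigma> *v x - (s * lam l) *\<^sub>R v"
      using ev by (simp add: matrix_vector_mult_diff_distrib matrix_vector_mult_scaleR)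
    also have "(x - s *\<^sub>R v) \<bullet> (\<Sigma> *v x - (s * lam l) *\<^sub>R v)
       = x \<bullet> (\<Sigma> *v x) - (s * lam l) * (x \<bullet> v) - s * (v \<bullet> (\<Sigma> *v x))
         + s * (s * lam l) * (v \<bullet> v)"
      by (simp add: inner_diff_left inner_diff_right algebra_simps)
    finally have "lam l * s * s \<le> x \<bullet> (\<Sigma> *v x)"
      using xv vSx vv by (simp add: algebra_simps)
    then have q: "lam l * s * s \<le> m * s" using domx[of x] xD2 by linarith
    have sl: "lam l * s \<le> m"
    proof (cases "s > 0")
      case True then show ?thesis using q by (simp add: mult_le_cancel_right)
    next
      case False
      have "s \<ge> 0" unfolding s_def f_def by (simp add: sum_nonneg)
      then have "s = 0" using False by simp
      then show ?thesis using m_nn by simp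
    qed
    have ls: "lam l * sum f P \<le> lam l * s" unfolding s_def by (rule mult_left_mono[OF bP lnn])
    have fe: "(\<lambda>i. (u l $ i)^2) = f" unfolding f_def v_def ..
    show ?thesis unfolding fe b_eq using sl ls by linarith
  qed
  have "Max ((\<lambda>l. lam l * (\<Sum>j = 1..k. order_stat (\<lambda>i. (u l $ i)^2) j)) ` {1..CARD('n)}) \<le> m"
    by (rule Max.boundedI) (use main in auto)
  then show "Max ((\<lambda>l. lam l * (\<Sum>j = 1..k. order_stat (\<lambda>i. (u l $ i)^2) j)) ` {1..CARD('n)})
        \<le> order_stat (\<lambda>i. \<Delta> $ i $ i) k"
    by (simp only: m_def dd_def)
qed

end
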